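(* Let $\tau\in[0,1]$ and let $\tilde f,f$ be Gaussian densities on $\mathbb{R}^q$ with means $\tilde m_z,m_z$ and positive definite covariances $\tilde K_z,K_z$. Then $\mathcal{D}_\tau(\tilde f\|f)\ge0$, with equality if and only if $\tilde f=f$.
   Context: $\Delta m_z=\tilde m_z-m_z$, $L_z$ any matrix with $K_z=L_zL_z^T$, $M=L_z^{-1}\tilde K_zL_z^{-T}$, $\|v\|_A^2=v^TAv$, matrix log and powers of positive definite matrices are the usual ones. $\mathcal{D}_0(\tilde f\|f)=\|\Delta m_z\|^2_{K_z^{-1}}+\mathrm{tr}(-\log(\tilde K_zK_z^{-1})+\tilde K_zK_z^{-1}-I_q)$; for $0<\tau<1$, $\mathcal{D}_\tau(\tilde f\|f)=\frac1{1-\tau}\|\Delta m_z\|^2_{K_z^{-1}}+\mathrm{tr}(\frac1{\tau(\tau-1)}M^\tau+\frac1{1-\tau}\tilde K_zK_z^{-1}+\frac1\tau I_q)$; $\mathcal{D}_1(\tilde f\|f)=\delta(\Delta m_z)+\mathrm{tr}(M\log M-\tilde K_zK_z^{-1}+I_q)$, with $\delta(\Delta m_z)=0$ if $\Delta m_z=0$ and $+\infty$ otherwise. *)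

theory Defs
  imports "HOL-Analysis.Analysis" "HOL-Library.Extended_Real"
begin

definition pos_def_mat :: "real^'q::finite^'q \<Rightarrow> bool" where
  "pos_def_mat K \<longleftrightarrow> transpose K = K \<and> (\<forall>x. x \<noteq> 0 \<longrightarrow> x \<bullet> (K *v x) > 0)"

definition diag_mat :: "('q::finite \<Rightarrow> real) \<Rightarrow> real^'q^'q" where
  "diag_mat d = (\<chi> i j. if i = j then d i else 0)"

text \<open>Primary matrix function g(A) of a diagonalisable matrix A = P diag(d) P^{-1}:
  g(A) = P diag(g o d) P^{-1}. (Independent of the diagonalisation.) This gives the usual
  matrix logarithm and real powers of positive definite matrices, and of matrices
  similar to them such as tilde K K^{-1}.\<close>
definition mat_fun :: "(real \<Rightarrow> real) \<Rightarrow> real^'q::finite^'q \<Rightarrow> real^'q^'q" where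
  "mat_fun g A = (SOME B. \<exists>(P::real^'q^'q) d. invertible P \<and> A = P ** diag_mat d ** matrix_inv P
                          \<and> B = P ** diag_mat (\<lambda>i. g (d i)) ** matrix_inv P)"

definition mat_log :: "real^'q^'q \<Rightarrow> real^'q^'q" where
  "mat_log A = mat_fun ln A"

definition mat_powr :: "real^'q^'q \<Rightarrow> real \<Rightarrow> real^'q^'q" where
  "mat_powr A t = mat_fun (\<lambda>x. x powr t) A"

definition factor_L :: "real^'q^'q \<Rightarrow> real^'q^'q" where
  "factor_L K = (SOME L. K = L ** transpose L)"

definition M_mat :: "real^'q^'q \<Rightarrow> real^'q^'q \<Rightarrow> real^'q^'q" where
  "M_mat Kt K = matrix_inv (factor_L K) ** Kt ** transpose (matrix_inv (factor_L K))"

definition wnorm2 :: "real^'q^'q \<Rightarrow> real^'q \<Rightarrow> real" where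
  "wnorm2 A v = v \<bullet> (A *v v)"

definition gauss_density :: "real^'q \<Rightarrow> real^'q^'q \<Rightarrow> real^'q \<Rightarrow> real" where
  "gauss_density m K x = (2 * pi) powr (- real CARD('q) / 2) * det K powr (-1/2)
      * exp (- wnorm2 (matrix_inv K) (x - m) / 2)"

text \<open>The divergence D_tau(tilde f || f), with tilde f = N(mt, Kt), f = N(m, K); values in ereal
  since D_1 may be +infinity.\<close>
definition D_tau :: "real \<Rightarrow> real^'q \<Rightarrow> real^'q^'q \<Rightarrow> real^'q \<Rightarrow> real^'q^'q \<Rightarrow> ereal" where
  "D_tau \<tau> mt Kt m K =
    (let dm = mt - m; KK = Kt ** matrix_inv K; M = M_mat Kt K; I = mat 1 :: real^'q^'q in
     if \<tau> = 0 then
       ereal (wnorm2 (matrix_inv K) dm + trace (- mat_log KK + KK - I))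
     else if \<tau> = 1 then
       (if dm = 0 then ereal (trace (M ** mat_log M - KK + I)) else \<infinity>)
     else
       ereal (1 / (1 - \<tau>) * wnorm2 (matrix_inv K) dm
              + trace ((1 / (\<tau> * (\<tau> - 1))) *\<^sub>R mat_powr M \<tau> + (1 / (1 - \<tau>)) *\<^sub>R KK
                       + (1 / \<tau>) *\<^sub>R I)))"

end

theory Submission
  imports Defs
begin



lemma sym_dot: fixes A :: "real^'n^'n" assumes "transpose A = A"
  shows "x \<bullet> (A *v y) = (A *v x) \<bullet> y"
  by (metis assms dot_lmul_matrix vector_transpose_matrix)

lemma quad_zero:
  fixes a b :: real assumes "\<And>t. 0 \<le> 2*t*a + t^2*b" shows "a = 0"
proof -
  have b: "b \<ge> 0" using assms[of 1] assms[of "-1"] by auto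
  define t where "t = -a/(b+1)"
  have bp: "b + 1 > 0" using b by simp
  have e1: "(b+1)^2 * (2*t*a) = - 2*a^2*(b+1)" using bp
    by (simp add: t_def power2_eq_square)
  have e2: "(b+1)^2 * (t^2*b) = a^2*b" using bp
    by (simp add: t_def power2_eq_square)
  have "(b+1)^2 * (2*t*a + t^2*b) = - (a^2*(b+2))"
    unfolding distrib_left e1 e2 by (simp add: algebra_simps)
  moreover have "0 \<le> (b+1)^2 * (2*t*a + t^2*b)" using assms[of t] by simp
  ultimately have "a^2 * (b+2) \<le> 0" by linarith
  hence "a^2 \<le> 0" using b unfolding mult_le_0_iff by auto
  thus ?thesis by simp
qed

lemma eig_exists:
  fixes A :: "real^'n^'n"
  assumes sym: "transpose A = A" and S: "subspace S" and inv: "\<forall>x\<in>S. A *v x \<in> S"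
    and ne: "S \<noteq> {0}"
  shows "\<exists>x\<in>S. norm x = 1 \<and> (\<exists>c. A *v x = c *\<^sub>R x)"
proof -
  let ?T = "sphere 0 1 \<inter> S"
  have cT: "compact ?T" by (intro compact_Int_closed compact_sphere closed_subspace S)
  obtain z where z: "z \<in> S" "z \<noteq> 0" using ne S subspace_0 by blast
  have "z /\<^sub>R norm z \<in> ?T" using z S by (simp add: subspace_scale)
  hence Tne: "?T \<noteq> {}" by blast
  have cont: "continuous_on ?T (\<lambda>x. x \<bullet> (A *v x))"
    by (intro continuous_intros continuous_on_id linear_continuous_on bounded_linear_inner_right matrix_vector_mul_bounded_linear)
  obtain x0 where x0: "x0 \<in> ?T" and mx: "\<forall>y\<in>?T. y \<bullet> (A *v y) \<le> x0 \<bullet> (A *v x0)"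
    using continuous_attains_sup[OF cT Tne cont] by blast
  define l where "l = x0 \<bullet> (A *v x0)"
  have x0S: "x0 \<in> S" and nx0: "norm x0 = 1" using x0 by auto
  have x0x0: "x0 \<bullet> x0 = 1" using nx0 by (simp add: dot_square_norm)
  define w where "w v = l *\<^sub>R v - A *v v" for v
  have q: "v \<bullet> w v \<ge> 0" if "v \<in> S" for v
  proof (cases "v = 0")
    case True then show ?thesis by (simp add: w_def)
  next
    case False
    let ?u = "v /\<^sub>R norm v"
    have "?u \<in> ?T" using that False S by (simp add: subspace_scale)
    hence "?u \<bullet> (A *v ?u) \<le> l" using mx l_def by blast
    moreover have "?u \<bullet> (A *v ?u) = (v \<bullet> (A *v v)) / (norm v)^2"
      by (simp add: matrix_vector_mult_scaleR power2_eq_square field_simps)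
    ultimately have "(v \<bullet> (A *v v)) / (norm v)^2 \<le> l" by simp
    hence "v \<bullet> (A *v v) \<le> l * (norm v)^2" using False
      by (simp add: divide_le_eq)
    thus ?thesis by (simp add: w_def inner_diff_right dot_square_norm)
  qed
  have wx0: "x0 \<bullet> w x0 = 0" by (simp add: w_def l_def x0x0 inner_diff_right)
  have lin: "w (a + t *\<^sub>R b) = w a + t *\<^sub>R w b" for a b t
    by (simp add: w_def matrix_vector_right_distrib matrix_vector_mult_scaleR algebra_simps)
  have wsym: "a \<bullet> w b = b \<bullet> w a" for a b
  proof -
    have "a \<bullet> (A *v b) = b \<bullet> (A *v a)" by (metis sym_dot[OF sym] inner_commute)
    thus ?thesis by (simp add: w_def inner_diff_right inner_commute[of a b])
  qed
  have orth: "y \<bullet> w x0 = 0" if y: "y \<in> S" for y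
  proof (rule quad_zero[where b = "y \<bullet> w y"])
    fix t :: real
    have "x0 + t *\<^sub>R y \<in> S" using S x0S y by (simp add: subspace_add subspace_scale)
    hence "0 \<le> (x0 + t *\<^sub>R y) \<bullet> w (x0 + t *\<^sub>R y)" by (rule q)
    also have "\<dots> = x0 \<bullet> w x0 + t * (x0 \<bullet> w y) + t * (y \<bullet> w x0) + t^2 * (y \<bullet> w y)"
      by (simp add: lin inner_add_left inner_add_right power2_eq_square ring_distribs)
    also have "\<dots> = 2*t*(y \<bullet> w x0) + t^2*(y \<bullet> w y)"
      using wx0 wsym[of x0 y] by simp
    finally show "0 \<le> 2*t*(y \<bullet> w x0) + t^2*(y \<bullet> w y)" .
  qed
  have "w x0 \<in> S" using S x0S inv by (simp add: w_def subspace_diff subspace_scale)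
  hence "w x0 \<bullet> w x0 = 0" by (rule orth)
  hence "w x0 = 0" by simp
  hence "A *v x0 = l *\<^sub>R x0" by (simp add: w_def)
  thus ?thesis using x0S nx0 by blast
qed

lemma eig_basis:
  fixes A :: "real^'n^'n"
  assumes sym: "transpose A = A"
  shows "subspace S \<Longrightarrow> (\<forall>x\<in>S. A *v x \<in> S) \<Longrightarrow>
    \<exists>B. B \<subseteq> S \<and> pairwise orthogonal B \<and> (\<forall>x\<in>B. norm x = 1)
       \<and> (\<forall>x\<in>B. \<exists>c. A *v x = c *\<^sub>R x) \<and> span B = S"
proof (induction "dim S" arbitrary: S rule: less_induct)
  case (less S)
  show ?case
  proof (cases "S = {0}")
    case True
    then show ?thesis by (intro exI[of _ "{}"]) auto
  next
    case False
    obtain x0 c where x0: "x0 \<in> S" "norm x0 = 1" "A *v x0 = c *\<^sub>R x0"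
      using eig_exists[OF sym less.prems False] by blast
    define S' where "S' = {v \<in> S. x0 \<bullet> v = 0}"
    have sub': "subspace S'" unfolding S'_def subspace_def
      using less.prems(1) by (auto simp: subspace_def inner_add_right)
    have inv': "\<forall>x\<in>S'. A *v x \<in> S'"
    proof
      fix v assume v: "v \<in> S'"
      have "x0 \<bullet> (A *v v) = (A *v x0) \<bullet> v" by (rule sym_dot[OF sym])
      also have "\<dots> = 0" using v x0 by (simp add: S'_def)
      finally show "A *v v \<in> S'" using v less.prems(2) by (simp add: S'_def)
    qed
    have x0x0: "x0 \<bullet> x0 = 1" using x0 by (simp add: dot_square_norm)
    have "S' \<subseteq> S" by (auto simp: S'_def)
    moreover have "x0 \<in> S - S'" using x0 x0x0 by (simp add: S'_def)
    ultimately have "S' \<subset> S" by blast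
    hence "span S' \<subset> span S" using sub' less.prems(1) by (metis span_eq_iff)
    hence "dim S' < dim S" by (rule dim_psubset)
    from less.hyps[OF this sub' inv'] obtain B where
      B: "B \<subseteq> S'" "pairwise orthogonal B" "\<forall>x\<in>B. norm x = 1"
         "\<forall>x\<in>B. \<exists>c. A *v x = c *\<^sub>R x" "span B = S'" by blast
    show ?thesis
    proof (intro exI[of _ "insert x0 B"] conjI)
      show "insert x0 B \<subseteq> S" using B x0 by (auto simp: S'_def)
      show "pairwise orthogonal (insert x0 B)"
        using B(1,2) by (auto simp: pairwise_insert S'_def orthogonal_def inner_commute)
      show "\<forall>x\<in>insert x0 B. norm x = 1" using B x0 by auto
      show "\<forall>x\<in>insert x0 B. \<exists>c. A *v x = c *\<^sub>R x" using B x0 by auto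
      show "span (insert x0 B) = S"
      proof
        show "span (insert x0 B) \<subseteq> S"
          using \<open>insert x0 B \<subseteq> S\<close> less.prems(1) by (simp add: span_minimal)
        show "S \<subseteq> span (insert x0 B)"
        proof
          fix v assume v: "v \<in> S"
          have "v - (x0 \<bullet> v) *\<^sub>R x0 \<in> S'" using v x0 x0x0 less.prems(1)
            by (simp add: S'_def subspace_diff subspace_scale inner_diff_right)
          hence "v - (x0 \<bullet> v) *\<^sub>R x0 \<in> span (insert x0 B)"
            using B(5) span_mono[of B "insert x0 B"] by auto
          moreover have "(x0 \<bullet> v) *\<^sub>R x0 \<in> span (insert x0 B)"
            by (simp add: span_base span_scale)
          ultimately have "(v - (x0 \<bullet> v) *\<^sub>R x0) + (x0 \<bullet> v) *\<^sub>R x0 \<in> span (insert x0 B)"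
            by (rule span_add)
          thus "v \<in> span (insert x0 B)" by simp
        qed
      qed
    qed
  qed
qed

lemma spectral:
  fixes A :: "real^'n^'n"
  assumes sym: "transpose A = A"
  shows "\<exists>(P::real^'n^'n) d. transpose P ** P = mat 1 \<and> P ** transpose P = mat 1
                \<and> A = P ** diag_mat d ** transpose P"
proof -
  obtain B where B: "pairwise orthogonal B" "\<forall>x\<in>B. norm x = 1"
       "\<forall>x\<in>B. \<exists>c. A *v x = c *\<^sub>R x" "span B = UNIV"
    using eig_basis[OF sym, of UNIV] by auto
  have "0 \<notin> B" using B(2) by auto
  hence ind: "independent B" using B(1) pairwise_orthogonal_independent by blast
  hence finB: "finite B" using independent_bound by blast
  have "card B = dim (UNIV :: (real^'n) set)"
    using basis_card_eq_dim[of B UNIV] ind B(4) by auto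
  hence cB: "card B = CARD('n)" by simp
  obtain g where g: "bij_betw g (UNIV::'n set) B"
    using finite_same_card_bij[of "UNIV::'n set" B] finB cB by auto
  define P :: "real^'n^'n" where "P = (\<chi> i j. g j $ i)"
  define d where "d j = (SOME c. A *v g j = c *\<^sub>R g j)" for j
  have gB: "g j \<in> B" for j using g by (auto simp: bij_betw_def)
  have dj: "A *v g j = d j *\<^sub>R g j" for j
    unfolding d_def using B(3) gB[of j] by (metis (mono_tags, lifting) someI_ex)
  have gg: "g i \<bullet> g j = (if i = j then 1 else 0)" for i j
  proof (cases "i = j")
    case True thus ?thesis using B(2) gB[of j] by (simp add: dot_square_norm)
  next
    case False
    hence "g i \<noteq> g j" using g by (auto simp: bij_betw_def inj_on_def)
    thus ?thesis using False B(1) gB[of i] gB[of j] by (auto simp: pairwise_def orthogonal_def)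
  qed
  have PtP: "transpose P ** P = mat 1"
    by (simp add: vec_eq_iff P_def matrix_matrix_mult_def transpose_def mat_def gg[symmetric] inner_vec_def)
  hence PPt: "P ** transpose P = mat 1" using matrix_left_right_inverse by blast
  have AP: "A ** P = P ** diag_mat d"
  proof -
    have "(A ** P) $ i $ j = (P ** diag_mat d) $ i $ j" for i j
    proof -
      have "(A ** P) $ i $ j = (A *v g j) $ i"
        by (simp add: P_def matrix_matrix_mult_def matrix_vector_mult_def)
      also have "\<dots> = d j * g j $ i" by (simp add: dj)
      also have "\<dots> = (P ** diag_mat d) $ i $ j"
        by (simp add: P_def matrix_matrix_mult_def diag_mat_def if_distrib[where f="\<lambda>x. _ * x"] sum.delta' cong: if_cong)
      finally show ?thesis .
    qed
    thus ?thesis by (simp add: vec_eq_iff)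
  qed
  have "A = A ** (P ** transpose P)" by (simp add: PPt)
  also have "\<dots> = P ** diag_mat d ** transpose P" by (simp add: matrix_mul_assoc AP)
  finally have "A = P ** diag_mat d ** transpose P" .
  with PtP PPt show ?thesis by (intro exI[of _ P] exI[of _ d]) simp
qed




lemma minv: fixes A :: "real^'n^'n" assumes "invertible A"
  shows "A ** matrix_inv A = mat 1" "matrix_inv A ** A = mat 1"
proof -
  have "\<exists>A'. A ** A' = mat 1 \<and> A' ** A = mat 1" using assms by (simp add: invertible_def)
  hence "A ** matrix_inv A = mat 1 \<and> matrix_inv A ** A = mat 1"
    unfolding matrix_inv_def by (rule someI_ex)
  thus "A ** matrix_inv A = mat 1" "matrix_inv A ** A = mat 1" by auto
qed

lemma minv_unique: fixes A B :: "real^'n^'n" assumes "A ** B = mat 1"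
  shows "matrix_inv A = B" "invertible A"
proof -
  show inv: "invertible A" using assms invertible_right_inverse by blast
  have "matrix_inv A = matrix_inv A ** (A ** B)" by (simp add: assms)
  also have "\<dots> = B" by (simp add: matrix_mul_assoc minv[OF inv])
  finally show "matrix_inv A = B" .
qed

lemma minv_inv: fixes A :: "real^'n^'n" assumes "invertible A"
  shows "invertible (matrix_inv A)"
  using minv[OF assms] invertible_def by blast

lemma diag_mul: "diag_mat a ** diag_mat b = diag_mat (\<lambda>i. a i * b i)"
  by (simp add: vec_eq_iff diag_mat_def matrix_matrix_mult_def if_distrib[where f="\<lambda>x. x * _"] sum.delta cong: if_cong)

lemma diag_one: "diag_mat (\<lambda>i. 1) = mat 1"
  by (simp add: vec_eq_iff diag_mat_def mat_def)

lemma diag_transpose: "transpose (diag_mat d) = diag_mat d"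
  by (simp add: vec_eq_iff diag_mat_def transpose_def)

lemma trace_diag: "trace (diag_mat d) = sum d UNIV"
  by (simp add: trace_def diag_mat_def)

lemma trace_scaleR: "trace (c *\<^sub>R (A::real^'n^'n)) = c * trace A"
  by (simp add: trace_def sum_distrib_left)

lemma trace_uminus: "trace (- (A::real^'n^'n)) = - trace A"
  by (simp add: trace_def sum_negf)

lemma trace_sim: fixes Q D :: "real^'n^'n" assumes "invertible Q"
  shows "trace (Q ** D ** matrix_inv Q) = trace D"
proof -
  have "trace (Q ** D ** matrix_inv Q) = trace (matrix_inv Q ** (Q ** D))" by (rule trace_mul_sym)
  also have "\<dots> = trace D" by (simp add: matrix_mul_assoc minv[OF assms])
  finally show ?thesis .
qed

lemma eig_col: fixes A P :: "real^'n^'n" assumes "A ** P = P ** diag_mat d"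
  shows "A *v column i P = d i *\<^sub>R column i P"
proof -
  have "column i P = P *v axis i 1" by (simp add: matrix_vector_mult_basis)
  hence "A *v column i P = (A ** P) *v axis i 1" by (simp add: matrix_vector_mul_assoc)
  also have "\<dots> = (P ** diag_mat d) *v axis i 1" by (simp add: assms)
  also have "\<dots> = d i *\<^sub>R column i P"
    by (simp add: matrix_vector_mult_basis vec_eq_iff column_def matrix_matrix_mult_def diag_mat_def
        if_distrib[where f="\<lambda>x. _ * x"] sum.delta' cong: if_cong)
  finally show ?thesis .
qed

lemma col_nz: fixes P :: "real^'n^'n" assumes "invertible P" shows "column i P \<noteq> 0"
proof
  assume "column i P = 0"
  hence "matrix_inv P *v (P *v axis i (1::real)) = 0" by (simp add: matrix_vector_mult_basis)
  hence "axis i (1::real) = 0" by (simp add: matrix_vector_mul_assoc minv[OF assms])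
  thus False by (simp add: axis_eq_0_iff)
qed

lemma diag_eig: fixes A P :: "real^'n^'n"
  assumes "invertible P" "A = P ** diag_mat d ** matrix_inv P"
    and pos: "\<And>v c. v \<noteq> 0 \<Longrightarrow> A *v v = c *\<^sub>R v \<Longrightarrow> c > 0"
  shows "d i > 0"
proof -
  have "A ** P = P ** diag_mat d" using assms(2) by (simp add: matrix_mul_assoc[symmetric] minv[OF assms(1)]) 
  thus ?thesis using pos[OF col_nz[OF assms(1)] eig_col] by blast
qed

lemma mat_fun_diag: fixes A P :: "real^'n^'n"
  assumes "invertible P" "A = P ** diag_mat d ** matrix_inv P"
  shows "\<exists>(Q::real^'n^'n) e. invertible Q \<and> A = Q ** diag_mat e ** matrix_inv Q
            \<and> mat_fun g A = Q ** diag_mat (\<lambda>i. g (e i)) ** matrix_inv Q"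
proof -
  let ?Pr = "\<lambda>B. \<exists>(Q::real^'n^'n) e. invertible Q \<and> A = Q ** diag_mat e ** matrix_inv Q
                          \<and> B = Q ** diag_mat (\<lambda>i. g (e i)) ** matrix_inv Q"
  have "?Pr (P ** diag_mat (\<lambda>i. g (d i)) ** matrix_inv P)" using assms by blast
  hence "?Pr (SOME B. ?Pr B)" by (rule someI)
  thus ?thesis unfolding mat_fun_def by simp
qed

lemma pd_inj: fixes K :: "real^'n^'n" assumes "pos_def_mat K" "K *v x = 0" shows "x = 0"
  using assms unfolding pos_def_mat_def by force

lemma pd_invertible: fixes K :: "real^'n^'n" assumes "pos_def_mat K" shows "invertible K"
  using pd_inj[OF assms] by (simp add: invertible_left_inverse matrix_left_invertible_ker)

lemma pd_diag: fixes K :: "real^'n^'n" assumes "pos_def_mat K"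
  shows "\<exists>(P::real^'n^'n) d. transpose P ** P = mat 1 \<and> P ** transpose P = mat 1
                \<and> K = P ** diag_mat d ** transpose P \<and> (\<forall>i. d i > 0)"
proof -
  have sK: "transpose K = K" using assms by (simp add: pos_def_mat_def)
  obtain P :: "real^'n^'n" and d where P: "transpose P ** P = mat 1" "P ** transpose P = mat 1"
      "K = P ** diag_mat d ** transpose P"
    using spectral[OF sK] by blast
  have "d i > 0" for i
  proof (rule diag_eig[OF _ _ _])
    show "invertible P" using P(2) invertible_right_inverse by blast
    show "K = P ** diag_mat d ** matrix_inv P" using P(3) minv_unique(1)[OF P(2)] by simp
    fix v c assume v: "v \<noteq> 0" "K *v v = c *\<^sub>R v"
    have "0 < v \<bullet> (K *v v)" using assms v(1) by (auto simp: pos_def_mat_def)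
    also have "\<dots> = c * (v \<bullet> v)" using v(2) by simp
    moreover have "v \<bullet> v > 0" using v(1) by simp
    ultimately show "c > 0" by (simp add: zero_less_mult_iff)
  qed
  thus ?thesis using P by blast
qed

lemma factor_L: fixes K :: "real^'n^'n" assumes "pos_def_mat K"
  shows "K = factor_L K ** transpose (factor_L K)"
proof -
  obtain P :: "real^'n^'n" and d where P: "transpose P ** P = mat 1" "P ** transpose P = mat 1"
      "K = P ** diag_mat d ** transpose P" "\<forall>i. d i > 0"
    using pd_diag[OF assms] by blast
  define L0 where "L0 = P ** diag_mat (\<lambda>i. sqrt (d i))"
  have "L0 ** transpose L0 = P ** (diag_mat (\<lambda>i. sqrt (d i)) ** diag_mat (\<lambda>i. sqrt (d i))) ** transpose P"
    by (simp add: L0_def matrix_transpose_mul diag_transpose matrix_mul_assoc)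
  also have "\<dots> = K" using P(3,4) by (simp add: diag_mul less_imp_le)
  finally have "\<exists>L::real^'n^'n. K = L ** transpose L" by metis
  thus ?thesis unfolding factor_L_def by (rule someI_ex)
qed




lemma fun_trace:
  fixes A P :: "real^'n^'n"
  assumes "invertible P" "A = P ** diag_mat d ** matrix_inv P"
    and pos: "\<And>v c. v \<noteq> 0 \<Longrightarrow> A *v v = c *\<^sub>R v \<Longrightarrow> c > 0"
  shows "\<exists>e::'n \<Rightarrow> real. (\<forall>i. e i > 0) \<and> trace A = sum e UNIV
          \<and> trace (mat_fun g A) = (\<Sum>i\<in>UNIV. g (e i))
          \<and> trace (A ** mat_fun g A) = (\<Sum>i\<in>UNIV. e i * g (e i))
          \<and> (A = mat 1 \<longleftrightarrow> (\<forall>i. e i = 1))"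
proof -
  obtain Q :: "real^'n^'n" and e where Q: "invertible Q" "A = Q ** diag_mat e ** matrix_inv Q"
      "mat_fun g A = Q ** diag_mat (\<lambda>i. g (e i)) ** matrix_inv Q"
    using mat_fun_diag[OF assms(1,2)] by blast
  note QQ = minv[OF Q(1)]
  have "e i > 0" for i by (rule diag_eig[OF Q(1,2)], rule pos, assumption+)
  hence epos: "\<forall>i. e i > 0" by blast
  have t1: "trace A = sum e UNIV" using Q by (simp add: trace_sim trace_diag)
  have t2: "trace (mat_fun g A) = (\<Sum>i\<in>UNIV. g (e i))" using Q by (simp add: trace_sim trace_diag)
  have "A ** mat_fun g A = Q ** (diag_mat e ** (matrix_inv Q ** Q) ** diag_mat (\<lambda>i. g (e i))) ** matrix_inv Q"
    using Q(2,3) by (simp add: matrix_mul_assoc)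
  also have "\<dots> = Q ** diag_mat (\<lambda>i. e i * g (e i)) ** matrix_inv Q"
    by (simp add: QQ diag_mul)
  finally have t3: "trace (A ** mat_fun g A) = (\<Sum>i\<in>UNIV. e i * g (e i))"
    using Q(1) by (simp add: trace_sim trace_diag)
  have t4: "A = mat 1 \<longleftrightarrow> (\<forall>i. e i = 1)"
  proof
    assume "A = mat 1"
    have "matrix_inv Q ** A ** Q = (matrix_inv Q ** Q) ** diag_mat e ** (matrix_inv Q ** Q)"
      using Q(2) by (simp add: matrix_mul_assoc)
    hence "diag_mat e = matrix_inv Q ** A ** Q" by (simp add: QQ)
    also have "\<dots> = mat 1" using \<open>A = mat 1\<close> by (simp add: QQ)
    finally have "diag_mat e = mat 1" .
    hence "diag_mat e $ i $ i = mat 1 $ i $ i" for i by simp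
    thus "\<forall>i. e i = 1" by (simp add: diag_mat_def mat_def)
  next
    assume "\<forall>i. e i = 1"
    hence "diag_mat e = mat 1" by (simp add: vec_eq_iff diag_mat_def mat_def)
    thus "A = mat 1" using Q(2) by (simp add: QQ)
  qed
  show ?thesis
    using epos t1 t2 t3 t4 by blast
qed





lemma dot_transp: fixes B :: "real^'n^'n" shows "x \<bullet> (transpose B *v y) = (B *v x) \<bullet> y"
  by (metis dot_lmul_matrix vector_transpose_matrix)

lemma key_setup:
  fixes Kt K :: "real^'n^'n"
  assumes pKt: "pos_def_mat Kt" and pK: "pos_def_mat K"
  defines "L \<equiv> factor_L K"
  defines "Li \<equiv> matrix_inv L"
  shows "L ** Li = mat 1" "Li ** L = mat 1" "invertible Li"
    "matrix_inv K = transpose Li ** Li"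
    "M_mat Kt K = Li ** Kt ** transpose Li"
    "Kt ** matrix_inv K = L ** M_mat Kt K ** Li"
    "M_mat Kt K = mat 1 \<longleftrightarrow> Kt = K"
    "Kt ** matrix_inv K = mat 1 \<longleftrightarrow> Kt = K"
    "\<And>v c. v \<noteq> 0 \<Longrightarrow> M_mat Kt K *v v = c *\<^sub>R v \<Longrightarrow> c > 0"
    "\<And>v c. v \<noteq> 0 \<Longrightarrow> (Kt ** matrix_inv K) *v v = c *\<^sub>R v \<Longrightarrow> c > 0"
    "\<exists>(P::real^'n^'n) d. invertible P \<and> M_mat Kt K = P ** diag_mat d ** matrix_inv P"
    "\<exists>(P::real^'n^'n) d. invertible P \<and> Kt ** matrix_inv K = P ** diag_mat d ** matrix_inv P"
    "trace (Kt ** matrix_inv K) = trace (M_mat Kt K)"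
proof -
  have KL: "K = L ** transpose L" unfolding L_def by (rule factor_L[OF pK])
  have iK: "invertible K" by (rule pd_invertible[OF pK])
  have "L ** (transpose L ** matrix_inv K) = mat 1"
    using minv[OF iK] KL by (simp add: matrix_mul_assoc)
  hence iL: "invertible L" using invertible_right_inverse by blast
  show LL: "L ** Li = mat 1" "Li ** L = mat 1" unfolding Li_def using minv[OF iL] by auto
  show iLi: "invertible Li" unfolding Li_def by (rule minv_inv[OF iL])
  have tLL: "transpose L ** transpose Li = mat 1" "transpose Li ** transpose L = mat 1"
    using LL by (metis matrix_transpose_mul transpose_mat)+
  have "K ** (transpose Li ** Li) = L ** (transpose L ** transpose Li) ** Li"
    using KL by (simp add: matrix_mul_assoc)
  also have "\<dots> = mat 1" using tLL LL by simp
  finally show Ki: "matrix_inv K = transpose Li ** Li" by (rule minv_unique)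
  show Mdef: "M_mat Kt K = Li ** Kt ** transpose Li" unfolding M_mat_def Li_def L_def ..
  have "L ** M_mat Kt K ** Li = (L ** Li) ** Kt ** (transpose Li ** Li)" by (simp add: Mdef matrix_mul_assoc)
  thus KK: "Kt ** matrix_inv K = L ** M_mat Kt K ** Li" using LL Ki by simp
  have symKt: "transpose Kt = Kt" using pKt by (simp add: pos_def_mat_def)
  show "M_mat Kt K = mat 1 \<longleftrightarrow> Kt = K"
  proof
    assume "M_mat Kt K = mat 1"
    hence "L ** (Li ** Kt ** transpose Li) ** transpose L = L ** transpose L" using Mdef by simp
    hence "(L ** Li) ** Kt ** (transpose Li ** transpose L) = K" using KL by (simp add: matrix_mul_assoc)
    thus "Kt = K" using LL tLL by simp
  next
    assume "Kt = K"
    hence "M_mat Kt K = (Li ** L) ** (transpose L ** transpose Li)" using Mdef KL by (simp add: matrix_mul_assoc)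
    thus "M_mat Kt K = mat 1" using LL tLL by simp
  qed
  show "Kt ** matrix_inv K = mat 1 \<longleftrightarrow> Kt = K"
  proof
    assume "Kt ** matrix_inv K = mat 1"
    hence "Kt ** matrix_inv K ** K = K" by simp
    thus "Kt = K" by (simp add: matrix_mul_assoc[symmetric] minv[OF iK])
  next
    assume "Kt = K"
    thus "Kt ** matrix_inv K = mat 1" by (simp add: minv[OF iK])
  qed
  have Mpos: "0 < x \<bullet> (M_mat Kt K *v x)" if "x \<noteq> 0" for x
  proof -
    have "transpose Li *v x \<noteq> 0"
    proof
      assume a: "transpose Li *v x = 0"
      have "transpose L *v (transpose Li *v x) = x"
        by (simp only: matrix_vector_mul_assoc tLL(1) matrix_vector_mul_lid)
      thus False using that a by simp
    qed
    hence pos0: "0 < (transpose Li *v x) \<bullet> (Kt *v (transpose Li *v x))"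
      using pKt unfolding pos_def_mat_def by blast
    have tv: "transpose Li *v x = x v* Li"
      using vector_transpose_matrix[of x "transpose Li"] unfolding transpose_transpose by (rule sym)
    have "(transpose Li *v x) \<bullet> (Kt *v (transpose Li *v x)) = x \<bullet> (Li *v (Kt *v (transpose Li *v x)))"
      by (simp only: tv dot_lmul_matrix)
    also have "\<dots> = x \<bullet> (M_mat Kt K *v x)"
      by (simp only: Mdef matrix_vector_mul_assoc matrix_mul_assoc)
    finally have "(transpose Li *v x) \<bullet> (Kt *v (transpose Li *v x)) = x \<bullet> (M_mat Kt K *v x)" .
    with pos0 show ?thesis by linarith
  qed
  show Meig: "\<And>v c. v \<noteq> 0 \<Longrightarrow> M_mat Kt K *v v = c *\<^sub>R v \<Longrightarrow> c > 0"
  proof -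
    fix v c assume v: "v \<noteq> (0::real^'n)" "M_mat Kt K *v v = c *\<^sub>R v"
    have "0 < v \<bullet> (M_mat Kt K *v v)" by (rule Mpos[OF v(1)])
    also have "\<dots> = c * (v \<bullet> v)" using v(2) by simp
    finally have "0 < c * (v \<bullet> v)" .
    moreover have "v \<bullet> v > 0" using v(1) by simp
    ultimately show "c > 0" by (simp add: zero_less_mult_iff)
  qed
  show "\<And>v c. v \<noteq> 0 \<Longrightarrow> (Kt ** matrix_inv K) *v v = c *\<^sub>R v \<Longrightarrow> c > 0"
  proof -
    fix v c assume v: "v \<noteq> (0::real^'n)" "(Kt ** matrix_inv K) *v v = c *\<^sub>R v"
    have "Li *v v \<noteq> 0"
    proof
      assume "Li *v v = 0"
      hence "L *v (Li *v v) = 0" by simp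
      thus False using v(1) LL by (simp add: matrix_vector_mul_assoc)
    qed
    moreover have "M_mat Kt K *v (Li *v v) = c *\<^sub>R (Li *v v)"
    proof -
      have "M_mat Kt K *v (Li *v v) = Li *v ((L ** M_mat Kt K ** Li) *v v)"
        using LL by (simp add: matrix_vector_mul_assoc matrix_mul_assoc)
      also have "\<dots> = c *\<^sub>R (Li *v v)" using v(2) KK by (simp add: matrix_vector_mult_scaleR)
      finally show ?thesis .
    qed
    ultimately show "c > 0" by (rule Meig)
  qed
  have symM: "transpose (M_mat Kt K) = M_mat Kt K"
    by (simp add: Mdef matrix_transpose_mul symKt matrix_mul_assoc)
  obtain Q :: "real^'n^'n" and d where Q: "transpose Q ** Q = mat 1" "Q ** transpose Q = mat 1"
      "M_mat Kt K = Q ** diag_mat d ** transpose Q"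
    using spectral[OF symM] by blast
  have iQ: "invertible Q" and Qi: "matrix_inv Q = transpose Q" using minv_unique[OF Q(2)] by auto
  show "\<exists>(P::real^'n^'n) d. invertible P \<and> M_mat Kt K = P ** diag_mat d ** matrix_inv P"
    using iQ Qi Q(3) by (intro exI[of _ Q] exI[of _ d]) simp
  have "(L ** Q) ** (transpose Q ** Li) = L ** (Q ** transpose Q) ** Li" by (simp add: matrix_mul_assoc)
  hence LQ: "(L ** Q) ** (transpose Q ** Li) = mat 1" using Q(2) LL by simp
  have "Kt ** matrix_inv K = (L ** Q) ** diag_mat d ** (transpose Q ** Li)"
    using KK Q(3) by (simp add: matrix_mul_assoc)
  thus "\<exists>(P::real^'n^'n) d. invertible P \<and> Kt ** matrix_inv K = P ** diag_mat d ** matrix_inv P"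
    using minv_unique[OF LQ] by (intro exI[of _ "L ** Q"] exI[of _ d]) simp
  have "trace (L ** M_mat Kt K ** Li) = trace (Li ** (L ** M_mat Kt K))" by (rule trace_mul_sym)
  thus "trace (Kt ** matrix_inv K) = trace (M_mat Kt K)" using KK LL by (simp add: matrix_mul_assoc)
qed




lemma exp_strict: fixes y :: real assumes "y \<noteq> 0" shows "1 + y < exp y"
  using exp_minus_greater[of "-y"] assms by simp

lemma ln_strict: fixes x :: real assumes "x > 0" "x \<noteq> 1" shows "ln x < x - 1"
proof -
  have "ln x \<noteq> 0" using assms by simp
  hence "1 + ln x < exp (ln x)" by (rule exp_strict)
  thus ?thesis using assms by simp
qed

lemma h0: fixes x :: real assumes "x > 0"
  shows "- ln x + x - 1 \<ge> 0" "- ln x + x - 1 = 0 \<longleftrightarrow> x = 1"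
  using ln_le_minus_one[OF assms] ln_strict[OF assms] by force+

lemma h1: fixes x :: real assumes x: "x > 0"
  shows "x * ln x - x + 1 \<ge> 0" "x * ln x - x + 1 = 0 \<longleftrightarrow> x = 1"
proof -
  have ix: "1/x > 0" using x by simp
  have l: "ln (1/x) = - ln x" using x by (simp add: ln_div)
  have a: "- ln x \<le> 1/x - 1" using ln_le_minus_one[OF ix] l by simp
  hence "x * (- ln x) \<le> x * (1/x - 1)" using x by (intro mult_left_mono) auto
  thus "x * ln x - x + 1 \<ge> 0" using x by (simp add: algebra_simps)
  show "x * ln x - x + 1 = 0 \<longleftrightarrow> x = 1"
  proof
    assume e: "x * ln x - x + 1 = 0"
    show "x = 1"
    proof (rule ccontr)
      assume "x \<noteq> 1"
      hence "1/x \<noteq> 1" by simp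
      hence "- ln x < 1/x - 1" using ln_strict[OF ix] l by simp
      hence "x * (- ln x) < x * (1/x - 1)" using x by (intro mult_strict_left_mono) auto
      thus False using e x by (simp add: algebra_simps)
    qed
  qed simp
qed

lemma powr_strict: fixes x t :: real assumes x: "x > 0" "x \<noteq> 1" and t: "0 < t" "t < 1"
  shows "x powr t < t * x + (1 - t)"
proof -
  define y where "y = ln x"
  have y: "y \<noteq> 0" using x by (simp add: y_def)
  have e1: "1 + (1-t)*y < exp ((1-t)*y)" using y t by (intro exp_strict) simp
  have e2: "1 + (-t*y) \<le> exp (-t*y)" by (rule exp_ge_add_one_self)
  have "1 = t * (1 + (1-t)*y) + (1-t) * (1 + (-t*y))" by (simp add: algebra_simps)
  also have "\<dots> < t * exp ((1-t)*y) + (1-t) * exp (-t*y)"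
    using e1 e2 t by (intro add_less_le_mono mult_strict_left_mono mult_left_mono) auto
  finally have "exp (t*y) * 1 < exp (t*y) * (t * exp ((1-t)*y) + (1-t) * exp (-t*y))"
    by (intro mult_strict_left_mono) auto
  also have "\<dots> = t * exp y + (1-t)"
    by (simp add: distrib_left mult.left_commute exp_add[symmetric] algebra_simps)
  finally have "exp (t*y) < t * exp y + (1 - t)" by simp
  thus ?thesis using x by (simp add: powr_def y_def)
qed

lemma htau: fixes x t :: real assumes x: "x > 0" and t: "0 < t" "t < 1"
  shows "x powr t / (t*(t-1)) + x/(1-t) + 1/t \<ge> 0"
    "x powr t / (t*(t-1)) + x/(1-t) + 1/t = 0 \<longleftrightarrow> x = 1"
proof -
  have d: "t * (1 - t) > 0" using t by simp
  have eqg: "p / (t*(t-1)) + x/(1-t) + 1/t = (t * x + (1 - t) - p) / (t * (1 - t))" for p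
  proof -
    have n1: "t \<noteq> 0" "1 - t \<noteq> 0" "t - 1 \<noteq> 0" using t by auto
    have "p / (t*(t-1)) = - p / (t*(1-t))" using n1 by (simp add: field_simps)
    moreover have "x/(1-t) = t*x/(t*(1-t))" using n1 by simp
    moreover have "1/t = (1-t)/(t*(1-t))" using n1 by simp
    ultimately show ?thesis by (simp add: add_divide_distrib diff_divide_distrib)
  qed
  note eq = eqg[of "x powr t"]
  have le: "x powr t \<le> t * x + (1 - t)"
  proof (cases "x = 1")
    case True thus ?thesis by simp
  next
    case False thus ?thesis using powr_strict[OF x False t] by simp
  qed
  show "x powr t / (t*(t-1)) + x/(1-t) + 1/t \<ge> 0" unfolding eq using le d by simp
  show "x powr t / (t*(t-1)) + x/(1-t) + 1/t = 0 \<longleftrightarrow> x = 1"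
  proof
    assume "x powr t / (t*(t-1)) + x/(1-t) + 1/t = 0"
    hence "(t * x + (1 - t) - x powr t) / (t * (1 - t)) = 0" unfolding eq .
    hence "t * x + (1 - t) - x powr t = 0" using d t by (auto simp add: divide_eq_0_iff)
    thus "x = 1" using powr_strict[OF x _ t] by force
  next
    assume "x = 1" thus "x powr t / (t*(t-1)) + x/(1-t) + 1/t = 0" unfolding eq by simp
  qed
qed




lemma quad_eq: fixes A B :: "real^'n^'n"
  assumes sA: "transpose A = A" and sB: "transpose B = B" and q: "\<And>v. v \<bullet> (A *v v) = v \<bullet> (B *v v)"
  shows "A = B"
proof -
  define C where "C = A - B"
  have sC: "transpose C = C" using sA sB by (simp add: C_def vec_eq_iff transpose_def)
  have qC: "v \<bullet> (C *v v) = 0" for v using q[of v] by (simp add: C_def matrix_vector_mult_diff_rdistrib inner_diff_right)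
  have uv: "u \<bullet> (C *v v) = 0" for u v
  proof -
    have "0 = (u + v) \<bullet> (C *v (u + v))" using qC by simp
    also have "\<dots> = u \<bullet> (C *v u) + u \<bullet> (C *v v) + v \<bullet> (C *v u) + v \<bullet> (C *v v)"
      by (simp add: matrix_vector_right_distrib inner_add_left inner_add_right)
    also have "v \<bullet> (C *v u) = u \<bullet> (C *v v)"
      using sym_dot[OF sC, of v u] by (simp add: inner_commute)
    finally show ?thesis using qC[of u] qC[of v] by simp
  qed
  have "C $ i $ j = 0" for i j
  proof -
    have "axis i 1 \<bullet> (C *v axis j 1) = 0" by (rule uv)
    moreover have "axis i 1 \<bullet> (C *v axis j 1) = C $ i $ j"
      by (simp add: matrix_vector_mult_basis inner_commute[of "axis i 1"] inner_axis column_def)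
    ultimately show ?thesis by simp
  qed
  hence "C = 0" by (simp add: vec_eq_iff)
  thus ?thesis by (simp add: C_def)
qed

lemma tBB: fixes B :: "real^'n^'n" shows "v \<bullet> ((transpose B ** B) *v v) = (B *v v) \<bullet> (B *v v)"
  by (simp only: matrix_vector_mul_assoc[symmetric] dot_transp)

lemma pd_facts: fixes K :: "real^'n^'n" assumes pK: "pos_def_mat K"
  shows "transpose (matrix_inv K) = matrix_inv K"
    "wnorm2 (matrix_inv K) v \<ge> 0"
    "wnorm2 (matrix_inv K) v = 0 \<longleftrightarrow> v = 0"
    "det K > 0"
proof -
  define L where "L = factor_L K"
  define Li where "Li = matrix_inv L"
  note S = key_setup[OF pK pK, folded L_def, folded Li_def]
  show "transpose (matrix_inv K) = matrix_inv K" using S(4) by (simp add: matrix_transpose_mul)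
  have w: "wnorm2 (matrix_inv K) v = (Li *v v) \<bullet> (Li *v v)"
    unfolding wnorm2_def S(4) by (rule tBB)
  show "wnorm2 (matrix_inv K) v \<ge> 0" unfolding w by simp
  have "Li *v v = 0 \<longleftrightarrow> v = 0"
  proof
    assume "Li *v v = 0"
    hence "L *v (Li *v v) = 0" by simp
    thus "v = 0" using S(1) by (simp add: matrix_vector_mul_assoc)
  qed simp
  thus "wnorm2 (matrix_inv K) v = 0 \<longleftrightarrow> v = 0" unfolding w by simp
  have KL: "K = L ** transpose L" unfolding L_def by (rule factor_L[OF pK])
  have "invertible L" using S(1) invertible_right_inverse by blast
  hence "det L \<noteq> 0" by (simp add: invertible_det_nz)
  moreover have "det K = det L * det L" using KL by (simp add: det_mul)
  ultimately show "det K > 0" by (metis linorder_neq_iff mult_neg_neg mult_pos_pos)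
qed

lemma gd_form: fixes K :: "real^'n^'n" and m x :: "real^'n" assumes pK: "pos_def_mat K"
  defines "c \<equiv> (2 * pi) powr (- real CARD('n) / 2) * det K powr (-1/2)"
  shows "c > 0" "gauss_density m K x = c * exp (- wnorm2 (matrix_inv K) (x - m) / 2)"
    "gauss_density m K m = c" "x \<noteq> m \<Longrightarrow> gauss_density m K x < c"
proof -
  show c: "c > 0" using pd_facts(4)[OF pK] by (simp add: c_def)
  show g: "gauss_density m K x = c * exp (- wnorm2 (matrix_inv K) (x - m) / 2)" for x
    by (simp add: gauss_density_def c_def)
  show "gauss_density m K m = c" by (simp add: g wnorm2_def)
  assume "x \<noteq> m"
  hence "wnorm2 (matrix_inv K) (x - m) > 0" using pd_facts(2,3)[OF pK, of "x - m"] by auto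
  hence "exp (- wnorm2 (matrix_inv K) (x - m) / 2) < 1" by simp
  thus "gauss_density m K x < c" using c g by simp
qed

lemma gd_ex: fixes K :: "real^'n^'n" and m :: "real^'n" assumes pK: "pos_def_mat K"
  shows "\<exists>c>0. (\<forall>x. gauss_density m K x = c * exp (- wnorm2 (matrix_inv K) (x - m) / 2))
          \<and> gauss_density m K m = c \<and> (\<forall>x. x \<noteq> m \<longrightarrow> gauss_density m K x < c)"
  using gd_form[OF pK] by blast

lemma gd_eq: fixes K Kt :: "real^'n^'n" assumes pKt: "pos_def_mat Kt" and pK: "pos_def_mat K"
  shows "gauss_density mt Kt = gauss_density m K \<longleftrightarrow> mt = m \<and> Kt = K"
proof
  assume E: "gauss_density mt Kt = gauss_density m K"
  obtain cF where F: "cF > 0" "\<forall>x. gauss_density m K x = cF * exp (- wnorm2 (matrix_inv K) (x - m) / 2)"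
     "gauss_density m K m = cF" "\<forall>x. x \<noteq> m \<longrightarrow> gauss_density m K x < cF"
    using gd_ex[OF pK, of m] by blast
  obtain cG where G: "cG > 0" "\<forall>x. gauss_density mt Kt x = cG * exp (- wnorm2 (matrix_inv Kt) (x - mt) / 2)"
     "gauss_density mt Kt mt = cG" "\<forall>x. x \<noteq> mt \<longrightarrow> gauss_density mt Kt x < cG"
    using gd_ex[OF pKt, of mt] by blast
  have mm: "mt = m"
  proof (rule ccontr)
    assume ne: "mt \<noteq> m"
    have "gauss_density m K mt < cF" using F(4) ne by blast
    moreover have "gauss_density mt Kt m < cG" using G(4) ne by metis
    ultimately show False using E F(3) G(3) by simp
  qed
  have cc: "cG = cF" using E F(3) G(3) mm by simp
  have qeq: "v \<bullet> (matrix_inv K *v v) = v \<bullet> (matrix_inv Kt *v v)" for v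
  proof -
    have "gauss_density m K (m + v) = gauss_density mt Kt (m + v)" using E by simp
    hence "cF * exp (- wnorm2 (matrix_inv K) v / 2) = cF * exp (- wnorm2 (matrix_inv Kt) v / 2)"
      using F(2) G(2) cc mm by simp
    hence "exp (- wnorm2 (matrix_inv K) v / 2) = exp (- wnorm2 (matrix_inv Kt) v / 2)" using F(1) by simp
    thus ?thesis by (simp add: wnorm2_def)
  qed
  have "matrix_inv K = matrix_inv Kt"
    by (rule quad_eq[OF pd_facts(1)[OF pK] pd_facts(1)[OF pKt] qeq])
  hence "K ** matrix_inv Kt = mat 1" using minv[OF pd_invertible[OF pK]] by simp
  hence "K ** matrix_inv Kt ** Kt = Kt" by simp
  hence "K = Kt" by (simp add: matrix_mul_assoc[symmetric] minv[OF pd_invertible[OF pKt]])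
  thus "mt = m \<and> Kt = K" using mm by simp
qed simp




lemma sum_h_zero: fixes f :: "'n::finite \<Rightarrow> real"
  assumes "\<And>i. f i \<ge> 0"
  shows "sum f UNIV \<ge> 0" "sum f UNIV = 0 \<longleftrightarrow> (\<forall>i. f i = 0)"
  using assms by (auto intro: sum_nonneg simp: sum_nonneg_eq_0_iff)

theorem proposition1:
  fixes \<tau> :: real and mt m :: "real^'q" and Kt K :: "real^'q^'q"
  assumes "0 \<le> \<tau>" and "\<tau> \<le> 1"
    and "pos_def_mat Kt" and "pos_def_mat K"
  shows "D_tau \<tau> mt Kt m K \<ge> 0
         \<and> (D_tau \<tau> mt Kt m K = 0 \<longleftrightarrow> gauss_density mt Kt = gauss_density m K)"
proof -
  note pKt = assms(3) and pK = assms(4)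
  note S = key_setup[OF pKt pK]
  define wn where "wn = wnorm2 (matrix_inv K) (mt - m)"
  have wn0: "wn \<ge> 0" unfolding wn_def by (rule pd_facts(2)[OF pK])
  have wnz: "wn = 0 \<longleftrightarrow> mt = m" unfolding wn_def using pd_facts(3)[OF pK, of "mt - m"] by simp
  have GE: "gauss_density mt Kt = gauss_density m K \<longleftrightarrow> mt = m \<and> Kt = K" by (rule gd_eq[OF pKt pK])
  define KK where "KK = Kt ** matrix_inv K"
  define M where "M = M_mat Kt K"
  have trI: "trace (mat 1 :: real^'q^'q) = (\<Sum>i\<in>(UNIV::'q set). 1)" by (simp add: trace_I)
  have Dexp: "D_tau \<tau> mt Kt m K =
     (if \<tau> = 0 then ereal (wn + trace (- mat_log KK + KK - mat 1))
      else if \<tau> = 1 then (if mt - m = 0 then ereal (trace (M ** mat_log M - KK + mat 1)) else \<infinity>)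
      else ereal (1 / (1 - \<tau>) * wn + trace ((1 / (\<tau> * (\<tau> - 1))) *\<^sub>R mat_powr M \<tau> + (1 / (1 - \<tau>)) *\<^sub>R KK
                       + (1 / \<tau>) *\<^sub>R mat 1)))"
    unfolding D_tau_def Let_def wn_def KK_def M_def by simp
  show ?thesis
  proof (cases "\<tau> = 0")
    case True
    obtain P :: "real^'q^'q" and d where P: "invertible P" "KK = P ** diag_mat d ** matrix_inv P"
      using S(12) unfolding KK_def by blast
    obtain e :: "'q \<Rightarrow> real" where e: "\<forall>i. e i > 0" "trace KK = sum e UNIV"
        "trace (mat_fun ln KK) = (\<Sum>i\<in>UNIV. ln (e i))" "KK = mat 1 \<longleftrightarrow> (\<forall>i. e i = 1)"
      using fun_trace[OF P, of ln] S(10) unfolding KK_def by blast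
    define T where "T = trace (- mat_log KK + KK - mat 1)"
    have T: "T = (\<Sum>i\<in>UNIV. - ln (e i) + e i - 1)"
      unfolding T_def mat_log_def using e(2,3) trI
      by (simp add: trace_add trace_sub trace_uminus sum.distrib sum_subtractf sum_negf)
    have h: "\<And>i. - ln (e i) + e i - 1 \<ge> 0" using h0(1) e(1) by blast
    have T0a: "T \<ge> 0" using T sum_h_zero(1)[OF h] by simp
    have "T = 0 \<longleftrightarrow> (\<forall>i. - ln (e i) + e i - 1 = 0)" using T sum_h_zero(2)[OF h] by simp
    also have "\<dots> \<longleftrightarrow> (\<forall>i. e i = 1)" using h0(2) e(1) by blast
    also have "\<dots> \<longleftrightarrow> Kt = K" using e(4) S(8) KK_def by simp
    finally have T0: "T \<ge> 0" "T = 0 \<longleftrightarrow> Kt = K" using T0a by auto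
    have "D_tau \<tau> mt Kt m K = ereal (wn + T)" using Dexp True T_def by simp
    thus ?thesis using T0 wn0 wnz GE by auto
  next
    case False
    obtain P :: "real^'q^'q" and d where P: "invertible P" "M = P ** diag_mat d ** matrix_inv P"
      using S(11) unfolding M_def by blast
    show ?thesis
    proof (cases "\<tau> = 1")
      case True
      show ?thesis
      proof (cases "mt = m")
        case mt: True
        obtain e :: "'q \<Rightarrow> real" where e: "\<forall>i. e i > 0" "trace M = sum e UNIV"
            "trace (M ** mat_fun ln M) = (\<Sum>i\<in>UNIV. e i * ln (e i))" "M = mat 1 \<longleftrightarrow> (\<forall>i. e i = 1)"
          using fun_trace[OF P, of ln] S(9) unfolding M_def by blast
        define T where "T = trace (M ** mat_log M - KK + mat 1)"
        have tKK: "trace KK = trace M" unfolding KK_def M_def by (rule S(13))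
        have T: "T = (\<Sum>i\<in>UNIV. e i * ln (e i) - e i + 1)"
          unfolding T_def mat_log_def using e(2,3) trI tKK
          by (simp add: trace_add trace_sub sum.distrib sum_subtractf)
        have h: "\<And>i. e i * ln (e i) - e i + 1 \<ge> 0" using h1(1) e(1) by blast
        have T0a: "T \<ge> 0" using T sum_h_zero(1)[OF h] by simp
        have "T = 0 \<longleftrightarrow> (\<forall>i. e i * ln (e i) - e i + 1 = 0)" using T sum_h_zero(2)[OF h] by simp
        also have "\<dots> \<longleftrightarrow> (\<forall>i. e i = 1)" using h1(2) e(1) by blast
        also have "\<dots> \<longleftrightarrow> Kt = K" using e(4) S(7) M_def by simp
        finally have T0: "T \<ge> 0" "T = 0 \<longleftrightarrow> Kt = K" using T0a by auto
        have "D_tau \<tau> mt Kt m K = ereal T" using Dexp True False T_def mt by simp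
        thus ?thesis using T0 GE mt by auto
      next
        case mt: False
        have "D_tau \<tau> mt Kt m K = \<infinity>" using Dexp True False mt by simp
        thus ?thesis using GE mt by simp
      qed
    next
      case ne1: False
      have t: "0 < \<tau>" "\<tau> < 1" using assms(1,2) False ne1 by auto
      obtain e :: "'q \<Rightarrow> real" where e: "\<forall>i. e i > 0" "trace M = sum e UNIV"
          "trace (mat_fun (\<lambda>x. x powr \<tau>) M) = (\<Sum>i\<in>UNIV. e i powr \<tau>)" "M = mat 1 \<longleftrightarrow> (\<forall>i. e i = 1)"
        using fun_trace[OF P, of "\<lambda>x. x powr \<tau>"] S(9) unfolding M_def by blast
      have tKK: "trace KK = trace M" unfolding KK_def M_def by (rule S(13))
      define T where "T = trace ((1 / (\<tau> * (\<tau> - 1))) *\<^sub>R mat_powr M \<tau> + (1 / (1 - \<tau>)) *\<^sub>R KK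
                       + (1 / \<tau>) *\<^sub>R mat 1)"
      have T: "T = (\<Sum>i\<in>UNIV. e i powr \<tau> / (\<tau>*(\<tau>-1)) + e i/(1-\<tau>) + 1/\<tau>)"
        unfolding T_def mat_powr_def using e(2,3) trI tKK
        by (simp add: trace_add trace_scaleR sum.distrib sum_distrib_left sum_divide_distrib)
      have h: "\<And>i. e i powr \<tau> / (\<tau>*(\<tau>-1)) + e i/(1-\<tau>) + 1/\<tau> \<ge> 0" using htau(1) e(1) t by blast
      have T0a: "T \<ge> 0" using T sum_h_zero(1)[OF h] by simp
      have "T = 0 \<longleftrightarrow> (\<forall>i. e i powr \<tau> / (\<tau>*(\<tau>-1)) + e i/(1-\<tau>) + 1/\<tau> = 0)"
        using T sum_h_zero(2)[OF h] by simp
      also have "\<dots> \<longleftrightarrow> (\<forall>i. e i = 1)" using htau(2)[OF _ t] e(1) by blast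
      also have "\<dots> \<longleftrightarrow> Kt = K" using e(4) S(7) M_def by simp
      finally have T0: "T \<ge> 0" "T = 0 \<longleftrightarrow> Kt = K" using T0a by auto
      have wn1: "1 / (1 - \<tau>) * wn \<ge> 0" "1 / (1 - \<tau>) * wn = 0 \<longleftrightarrow> mt = m"
        using wn0 wnz t by auto
      have "D_tau \<tau> mt Kt m K = ereal (1 / (1 - \<tau>) * wn + T)" using Dexp False ne1 T_def by simp
      thus ?thesis using T0 wn1 GE by auto
    qed
  qed
qed


end
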